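(* There is a weight-halving bijection from $[\mathcal{D}_{o}\times\mathcal{D}_{o}\times\mathcal{D}\times\mathcal{D}]_{\mathsf{even}}$ to $\mathcal{D}_{o}\times\mathcal{D}_{o}\times\mathcal{D}_{o}\times\mathcal{D}_{o}\times\mathcal{D}\times\mathcal{D}\times\mathcal{D}\times\mathcal{D}$. As a consequence, the numbers $P_{1^{-4}2^{6}4^{-2}}(n)$ defined by $\sum_{n\ge0}P_{1^{-4}2^{6}4^{-2}}(n)q^n=\frac{f_2^6}{f_1^4f_4^2}$ form a $2$-convolutive sequence, i.e. $\sum_{n\ge0}P_{1^{-4}2^{6}4^{-2}}(2n)q^n=\big(\sum_{n\ge0}P_{1^{-4}2^{6}4^{-2}}(n)q^n\big)^2$.
   Context: A partition is a non-increasing finite sequence of positive integers (parts); its weight is the sum of its parts. $\mathcal{D}$ denotes the set of partitions into distinct parts, and $\mathcal{D}_{o}$ the set of partitions into distinct odd parts. The weight of a tuple of partitions is the sum of the weights of its components. For a set $\mathcal{U}$ of weighted objects, $[\mathcal{U}]_{\mathsf{even}}$ is the subset of members of even weight. A bijection is weight-halving if the weight of the image is half the weight of the object. $f_i:=(q^i;q^i)_\infty=\prod_{k\ge1}(1-q^{ik})$. A sequence $(a_n)_{n\ge0}$ is $m$-convolutive if $\sum_{n\ge0}a_{mn}q^n=\big(\sum_{n\ge0}a_nq^n\big)^m$. *)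

theory Defs
  imports "HOL-Computational_Algebra.Formal_Power_Series"
begin

text \<open>A partition is represented as a list of its parts in non-increasing order.
  Partitions into distinct parts are strictly decreasing lists of positive integers.\<close>

definition is_partition :: "nat list \<Rightarrow> bool" where
  "is_partition xs \<longleftrightarrow> sorted_wrt (\<ge>) xs \<and> (\<forall>x\<in>set xs. 0 < x)"

definition weight :: "nat list \<Rightarrow> nat" where
  "weight xs = sum_list xs"

definition D :: "nat list set" where
  "D = {xs. is_partition xs \<and> distinct xs}"

definition Do :: "nat list set" where
  "Do = {xs. xs \<in> D \<and> (\<forall>x\<in>set xs. odd x)}"

definition weight4 :: "nat list \<times> nat list \<times> nat list \<times> nat list \<Rightarrow> nat" where
  "weight4 t = (case t of (a,b,c,d) \<Rightarrow> weight a + weight b + weight c + weight d)"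

definition weight8 :: "nat list \<times> nat list \<times> nat list \<times> nat list \<times>
                       nat list \<times> nat list \<times> nat list \<times> nat list \<Rightarrow> nat" where
  "weight8 t = (case t of (a,b,c,d,e,f,g,h) \<Rightarrow>
     weight a + weight b + weight c + weight d + weight e + weight f + weight g + weight h)"

definition Src :: "(nat list \<times> nat list \<times> nat list \<times> nat list) set" where
  "Src = {t. t \<in> Do \<times> Do \<times> D \<times> D \<and> even (weight4 t)}"

definition Tgt :: "(nat list \<times> nat list \<times> nat list \<times> nat list \<times>
                    nat list \<times> nat list \<times> nat list \<times> nat list) set" where
  "Tgt = Do \<times> Do \<times> Do \<times> Do \<times> D \<times> D \<times> D \<times> D"

text \<open>f_i = prod_{k>=1} (1 - q^{ik}) as a formal power series; for i >= 1 its n-th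
  coefficient equals that of the finite product over k = 1..n.\<close>
definition f_fps :: "nat \<Rightarrow> rat fps" where
  "f_fps i = Abs_fps (\<lambda>n. fps_nth (\<Prod>k\<in>{1..n}. (1 - fps_X ^ (i * k))) n)"

definition P_seq :: "nat \<Rightarrow> rat" where
  "P_seq n = fps_nth (f_fps 2 ^ 6 / (f_fps 1 ^ 4 * f_fps 4 ^ 2)) n"

end

theory Submission
  imports Defs
begin
unbundle fps_syntax


definition eqm :: "nat \<Rightarrow> rat fps \<Rightarrow> rat fps \<Rightarrow> bool" where
  "eqm m A B \<longleftrightarrow> (\<forall>i\<le>m. A $ i = B $ i)"

lemma eqm_refl[simp]: "eqm m A A" by (simp add: eqm_def)
lemma eqm_sym: "eqm m A B \<Longrightarrow> eqm m B A" by (simp add: eqm_def)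
lemma eqm_trans: "eqm m A B \<Longrightarrow> eqm m B C \<Longrightarrow> eqm m A C" by (simp add: eqm_def)
lemma eqm_mono: "eqm m A B \<Longrightarrow> n \<le> m \<Longrightarrow> eqm n A B" by (simp add: eqm_def)

lemma eqm_add: "eqm m A B \<Longrightarrow> eqm m A2 B2 \<Longrightarrow> eqm m (A + A2) (B + B2)"
  by (simp add: eqm_def)

lemma eqm_mult: "eqm m A B \<Longrightarrow> eqm m A2 B2 \<Longrightarrow> eqm m (A * A2) (B * B2)"
  unfolding eqm_def fps_mult_nth
proof (intro allI impI)
  fix i assume h: "\<forall>i\<le>m. A $ i = B $ i" "\<forall>i\<le>m. A2 $ i = B2 $ i" "i \<le> m"
  show "(\<Sum>j = 0..i. A $ j * A2 $ (i - j)) = (\<Sum>j = 0..i. B $ j * B2 $ (i - j))"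
    by (rule sum.cong) (use h in auto)
qed

lemma eqm_sum: "(\<And>k. k \<in> K \<Longrightarrow> eqm m (f k) (g k)) \<Longrightarrow> eqm m (\<Sum>k\<in>K. f k) (\<Sum>k\<in>K. g k)"
  unfolding eqm_def fps_sum_nth by auto

lemma eqm_prod: "(\<And>k. k \<in> K \<Longrightarrow> eqm m (f k) (g k)) \<Longrightarrow> eqm m (\<Prod>k\<in>K. f k) (\<Prod>k\<in>K. g k)"
proof (induction K rule: infinite_finite_induct)
  case (insert x F)
  then show ?case by (simp add: eqm_mult)
qed auto

lemma eqm_power: assumes "eqm m A B" shows "eqm m (A ^ n) (B ^ n)"
proof (induction n)
  case (Suc n)
  have "eqm m (A * A ^ n) (B * B ^ n)" using assms Suc by (rule eqm_mult)
  then show ?case by simp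
qed simp

lemma eqm_inverse:
  assumes "eqm m A B" "A $ 0 \<noteq> 0"
  shows "eqm m (inverse A) (inverse B)"
proof -
  have B0: "B $ 0 \<noteq> 0" using assms by (simp add: eqm_def)
  have BB: "B * inverse B = 1" using B0 by (rule inverse_mult_eq_1')
  have AA: "inverse A * A = 1" using assms(2) by (rule inverse_mult_eq_1)
  have 1: "inverse A = (inverse A * B) * inverse B"
    by (metis BB mult.assoc mult.right_neutral)
  have "eqm m ((inverse A * B) * inverse B) ((inverse A * A) * inverse B)"
    by (intro eqm_mult eqm_sym[OF assms(1)] eqm_refl)
  then show ?thesis using 1 AA by simp
qed

lemma eqm_all: "(\<And>m. eqm m A B) \<Longrightarrow> A = B"
  by (auto simp: eqm_def fps_eq_iff)

lemma eqm_Xpow_mult: "e > m \<Longrightarrow> eqm m (fps_X ^ e * A) 0"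
  by (auto simp: eqm_def fps_X_power_mult_nth)

definition iprod :: "(nat \<Rightarrow> rat fps) \<Rightarrow> rat fps" where
  "iprod g = Abs_fps (\<lambda>n. (\<Prod>k\<in>{1..n}. g k) $ n)"

definition good :: "(nat \<Rightarrow> rat fps) \<Rightarrow> bool" where
  "good g \<longleftrightarrow> (\<forall>k n. 0 < k \<longrightarrow> n < k \<longrightarrow> eqm n (g k) 1)"

lemma prod_tail_eqm:
  assumes "good g" "i \<le> N"
  shows "eqm i (\<Prod>k\<in>{1..N}. g k) (\<Prod>k\<in>{1..i}. g k)"
proof -
  have "{1..N} = {1..i} \<union> {i+1..N}" using assms by auto
  then have "(\<Prod>k\<in>{1..N}. g k) = (\<Prod>k\<in>{1..i}. g k) * (\<Prod>k\<in>{i+1..N}. g k)"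
    by (simp add: prod.union_disjoint)
  moreover have "eqm i (\<Prod>k\<in>{i+1..N}. g k) (\<Prod>k\<in>{i+1..N}. 1)"
    using assms(1) by (intro eqm_prod) (auto simp: good_def)
  ultimately show ?thesis using eqm_mult[OF eqm_refl] by fastforce
qed

lemma iprod_eqm:
  assumes "good g" "m \<le> N"
  shows "eqm m (iprod g) (\<Prod>k\<in>{1..N}. g k)"
  unfolding eqm_def
proof (intro allI impI)
  fix i assume i: "i \<le> m"
  have "eqm i (\<Prod>k\<in>{1..N}. g k) (\<Prod>k\<in>{1..i}. g k)"
    using assms i by (intro prod_tail_eqm) auto
  then show "iprod g $ i = (\<Prod>k\<in>{1..N}. g k) $ i"
    by (simp add: iprod_def eqm_def)
qed

lemma iprod_0: "iprod g $ 0 = 1"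
  by (simp add: iprod_def)

lemma good_intro:
  assumes "\<And>k::nat. 0 < k \<Longrightarrow> \<exists>e (c::rat fps). e \<ge> k \<and> g k = 1 + c * fps_X ^ e"
  shows "good g"
  unfolding good_def
proof (intro allI impI)
  fix k n :: nat assume h: "0 < k" "n < k"
  then obtain e c where ec: "e \<ge> k" "g k = 1 + c * fps_X ^ e" using assms by blast
  have "eqm n (fps_X ^ e * c) 0" using ec h by (intro eqm_Xpow_mult) auto
  then have "eqm n (1 + fps_X ^ e * c) (1 + 0)" by (intro eqm_add) auto
  then show "eqm n (g k) 1" using ec by (simp add: mult.commute)
qed


lemma prod_1_Xpow_coeff:
  assumes "finite K"
  shows "(\<Prod>k\<in>K. 1 + fps_X ^ k :: rat fps) $ n = of_nat (card {S \<in> Pow K. \<Sum>S = n})"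
proof -
  have "(\<Prod>k\<in>K. 1 + fps_X ^ k :: rat fps) = (\<Prod>k\<in>K. fps_X ^ k + 1)" by (simp add: add.commute)
  also have "\<dots> = (\<Sum>S\<in>Pow K. (\<Prod>k\<in>S. fps_X ^ k) * (\<Prod>k\<in>K-S. 1))"
    by (rule prod_add[OF assms])
  also have "\<dots> = (\<Sum>S\<in>Pow K. fps_X ^ (\<Sum>S))" by (simp add: power_sum)
  finally have "(\<Prod>k\<in>K. 1 + fps_X ^ k :: rat fps) $ n = (\<Sum>S\<in>Pow K. (fps_X ^ (\<Sum>S) :: rat fps) $ n)"
    by (simp add: fps_sum_nth)
  also have "\<dots> = (\<Sum>S\<in>Pow K. if \<Sum>S = n then 1 else 0)"
    by (intro sum.cong) auto
  also have "\<dots> = of_nat (card {S \<in> Pow K. \<Sum>S = n})"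
    using assms by (simp add: sum.If_cases Int_def Pow_def)
  finally show ?thesis .
qed

definition pset :: "nat set \<Rightarrow> nat \<Rightarrow> nat set set" where
  "pset A n = {S. S \<subseteq> A \<and> finite S \<and> \<Sum>S = n}"

lemma pset_eq:
  assumes "0 \<notin> A" "A \<inter> {1..n} \<subseteq> K" "K \<subseteq> A" "finite K"
  shows "{S \<in> Pow K. \<Sum>S = n} = pset A n"
proof (intro set_eqI iffI)
  fix S assume "S \<in> {S \<in> Pow K. \<Sum>S = n}"
  then show "S \<in> pset A n" using assms finite_subset unfolding pset_def by auto
next
  fix S assume S: "S \<in> pset A n"
  have "S \<subseteq> K"
  proof
    fix x assume x: "x \<in> S"
    have "x \<le> \<Sum>S" using S x by (intro member_le_sum) (auto simp: pset_def)
    moreover have "x \<in> A" using S x by (auto simp: pset_def)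
    moreover have "x \<noteq> 0" using assms(1) \<open>x \<in> A\<close> by metis
    ultimately have "x \<in> A \<inter> {1..n}" using S by (auto simp: pset_def)
    then show "x \<in> K" using assms(2) by blast
  qed
  then show "S \<in> {S \<in> Pow K. \<Sum>S = n}" using S by (auto simp: pset_def)
qed

definition DA :: "nat set \<Rightarrow> nat list set" where
  "DA A = {xs. sorted_wrt (>) xs \<and> set xs \<subseteq> A}"

lemma sorted_ge_distinct: "sorted_wrt (\<ge>) xs \<and> distinct xs \<longleftrightarrow> sorted_wrt (>) (xs::nat list)"
  by (induction xs) (auto simp: order.order_iff_strict)

lemma D_eq: "D = DA {k. 0 < k}"
  unfolding D_def DA_def is_partition_def using sorted_ge_distinct by blast

lemma Do_eq: "Do = DA {k. odd k}"
  unfolding Do_def D_def DA_def is_partition_def using sorted_ge_distinct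
  by (auto dest: odd_pos)

lemma DA_inj: "inj_on set (DA A)"
proof (rule inj_onI)
  fix xs ys assume h: "xs \<in> DA A" "ys \<in> DA A" "set xs = set ys"
  have "sorted_wrt (\<ge>) xs \<and> distinct xs" "sorted_wrt (\<ge>) ys \<and> distinct ys"
    using h sorted_ge_distinct by (auto simp: DA_def)
  then have "sorted (rev xs)" "distinct (rev xs)" "sorted (rev ys)" "distinct (rev ys)"
    by (auto simp: sorted_wrt_rev)
  then have "rev xs = rev ys" using h(3) by (intro sorted_distinct_set_unique) auto
  then show "xs = ys" by simp
qed

lemma DA_image:
  assumes "0 \<notin> A"
  shows "set ` {xs \<in> DA A. weight xs = n} = pset A n"
proof (intro set_eqI iffI)
  fix S assume "S \<in> set ` {xs \<in> DA A. weight xs = n}"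
  then obtain xs where xs: "xs \<in> DA A" "weight xs = n" "S = set xs" by auto
  have "distinct xs" using xs(1) by (auto simp: DA_def sorted_ge_distinct[symmetric])
  then show "S \<in> pset A n" using xs by (auto simp: pset_def DA_def weight_def distinct_sum_list_conv_Sum)
next
  fix S assume S: "S \<in> pset A n"
  let ?xs = "rev (sorted_list_of_set S)"
  have "?xs \<in> DA A" using S by (auto simp: DA_def pset_def sorted_wrt_rev)
  moreover have "weight ?xs = n" using S
    by (simp add: weight_def pset_def distinct_sum_list_conv_Sum)
  moreover have "set ?xs = S" using S by (simp add: pset_def)
  ultimately show "S \<in> set ` {xs \<in> DA A. weight xs = n}"
    by (intro image_eqI[of _ _ ?xs]) auto
qed

lemma pset_fin: "finite (pset A n)"
proof -
  have "pset A n \<subseteq> Pow {..n}"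
  proof
    fix S assume S: "S \<in> pset A n"
    have fS: "finite S" "\<Sum>S = n" using S unfolding pset_def by auto
    have "x \<le> n" if x: "x \<in> S" for x
    proof -
      have "x \<le> \<Sum>S" using x fS(1) by (intro member_le_sum) auto
      then show ?thesis using fS(2) by simp
    qed
    then show "S \<in> Pow {..n}" by auto
  qed
  then show ?thesis by (rule finite_subset) simp
qed

lemma DA_card:
  assumes "0 \<notin> A"
  shows "card {xs \<in> DA A. weight xs = n} = card (pset A n)"
    and "finite {xs \<in> DA A. weight xs = n}"
proof -
  have inj: "inj_on set {xs \<in> DA A. weight xs = n}" by (rule inj_on_subset[OF DA_inj]) blast
  show "card {xs \<in> DA A. weight xs = n} = card (pset A n)"
    using card_image[OF inj] unfolding DA_image[OF assms] by simp
  show "finite {xs \<in> DA A. weight xs = n}"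
  proof (rule finite_imageD[OF _ inj])
    show "finite (set ` {xs \<in> DA A. weight xs = n})"
      unfolding DA_image[OF assms] by (rule pset_fin)
  qed
qed

definition gfw :: "'a set \<Rightarrow> ('a \<Rightarrow> nat) \<Rightarrow> rat fps" where
  "gfw S w = Abs_fps (\<lambda>n. of_nat (card {x \<in> S. w x = n}))"

definition Wd :: "rat fps" where "Wd = iprod (\<lambda>k. 1 + fps_X ^ k)"
definition Up :: "rat fps" where "Up = iprod (\<lambda>k. 1 + fps_X ^ (2*k-1))"

lemma gfw_D: "gfw D weight = Wd"
proof (rule fps_ext)
  fix n
  have "Wd $ n = of_nat (card {S \<in> Pow {1..n}. \<Sum>S = n})"
    by (simp add: Wd_def iprod_def prod_1_Xpow_coeff)
  also have "{S \<in> Pow {1..n}. \<Sum>S = n} = pset {k. 0 < k} n"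
    by (rule pset_eq) auto
  finally show "gfw D weight $ n = Wd $ n"
    by (simp add: gfw_def D_eq DA_card)
qed

lemma finite_D: "finite {x \<in> D. weight x = n}"
  by (simp add: D_eq DA_card)

lemma finite_Do: "finite {x \<in> Do. weight x = n}"
  by (simp add: Do_eq DA_card)

lemma gfw_Do: "gfw Do weight = Up"
proof (rule fps_ext)
  fix n
  have inj: "inj_on (\<lambda>k::nat. 2*k-1) {1..n}" by (auto simp: inj_on_def)
  have "(\<Prod>k\<in>{1..n}. 1 + fps_X ^ (2*k-1) :: rat fps) = (\<Prod>j\<in>(\<lambda>k. 2*k-1) ` {1..n}. 1 + fps_X ^ j)"
    by (simp only: prod.reindex[OF inj] o_def)
  then have "Up $ n = of_nat (card {S \<in> Pow ((\<lambda>k. 2*k-1) ` {1..n}). \<Sum>S = n})"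
    by (simp add: Up_def iprod_def prod_1_Xpow_coeff)
  also have "{S \<in> Pow ((\<lambda>k. 2*k-1) ` {1..n}). \<Sum>S = n} = pset {k. odd k} n"
  proof (rule pset_eq)
    show "{k. odd k} \<inter> {1..n} \<subseteq> (\<lambda>k. 2 * k - 1) ` {1..n}"
    proof
      fix x assume "x \<in> {k. odd k} \<inter> {1..n}"
      then have "odd x" "1 \<le> x" "x \<le> n" by auto
      then obtain j where "x = 2*j+1" by (meson oddE)
      then show "x \<in> (\<lambda>k. 2 * k - 1) ` {1..n}" using \<open>x \<le> n\<close>
        by (intro image_eqI[of _ _ "j+1"]) auto
    qed
  qed auto
  finally show "gfw Do weight $ n = Up $ n"
    by (simp add: gfw_def Do_eq DA_card)
qed


lemma gfw_prod:
  fixes w1 :: "'a \<Rightarrow> nat" and w2 :: "'b \<Rightarrow> nat" and w :: "'a \<times> 'b \<Rightarrow> nat"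
  assumes f1: "\<And>n. finite {x \<in> S. w1 x = n}" and f2: "\<And>n. finite {y \<in> T. w2 y = n}"
    and w: "\<And>x y. w (x, y) = w1 x + w2 y"
  shows "gfw (S \<times> T) w = gfw S w1 * gfw T w2" and "finite {p \<in> S \<times> T. w p = n}"
proof -
  have split: "{p \<in> S \<times> T. w p = n} = (\<Union>i\<in>{0..n}. {x \<in> S. w1 x = i} \<times> {y \<in> T. w2 y = n - i})" for n
    using w by (auto; force)
  show fin: "finite {p \<in> S \<times> T. w p = n}" for n
    unfolding split using f1 f2 by auto
  show "gfw (S \<times> T) w = gfw S w1 * gfw T w2"
  proof (rule fps_ext)
    fix n
    have "card {p \<in> S \<times> T. w p = n} = (\<Sum>i\<in>{0..n}. card ({x \<in> S. w1 x = i} \<times> {y \<in> T. w2 y = n - i}))"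
      unfolding split
      by (rule card_UN_disjoint) (use f1 f2 in auto)
    also have "\<dots> = (\<Sum>i\<in>{0..n}. card {x \<in> S. w1 x = i} * card {y \<in> T. w2 y = n - i})"
      by (simp add: card_cartesian_product)
    finally show "gfw (S \<times> T) w $ n = (gfw S w1 * gfw T w2) $ n"
      by (simp add: gfw_def fps_mult_nth)
  qed
qed

lemma bij_from_counts:
  fixes ws :: "'a \<Rightarrow> nat" and wt :: "'b \<Rightarrow> nat"
  assumes fs: "\<And>n. finite {x \<in> S. ws x = n}" and ft: "\<And>n. finite {y \<in> T. wt y = n}"
    and ev: "\<And>x. x \<in> S \<Longrightarrow> even (ws x)"
    and c: "\<And>n. card {x \<in> S. ws x = 2 * n} = card {y \<in> T. wt y = n}"
  shows "\<exists>\<phi>. bij_betw \<phi> S T \<and> (\<forall>x\<in>S. 2 * wt (\<phi> x) = ws x)"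
proof -
  have "\<forall>n. \<exists>b. bij_betw b {x \<in> S. ws x = 2 * n} {y \<in> T. wt y = n}"
    using fs ft c by (blast intro: finite_same_card_bij)
  then obtain b where b: "\<And>n. bij_betw (b n) {x \<in> S. ws x = 2 * n} {y \<in> T. wt y = n}"
    by metis
  define \<phi> where "\<phi> x = b (ws x div 2) x" for x
  have mem: "x \<in> {x \<in> S. ws x = 2 * (ws x div 2)}" if "x \<in> S" for x
    using ev[OF that] that by auto
  have img: "\<phi> x \<in> T \<and> wt (\<phi> x) = ws x div 2" if "x \<in> S" for x
    using bij_betwE[OF b] mem[OF that] unfolding \<phi>_def by blast
  have "bij_betw \<phi> S T"
  proof (rule bij_betw_imageI)
    show "inj_on \<phi> S"
    proof (rule inj_onI)
      fix x y assume xy: "x \<in> S" "y \<in> S" "\<phi> x = \<phi> y"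
      then have eqw: "ws x div 2 = ws y div 2" using img by metis
      have "y \<in> {x \<in> S. ws x = 2 * (ws x div 2)}" using mem[OF xy(2)] eqw by simp
      then have "y \<in> {z \<in> S. ws z = 2 * (ws x div 2)}" using eqw by simp
      moreover have "x \<in> {z \<in> S. ws z = 2 * (ws x div 2)}" using mem[OF xy(1)] by simp
      moreover have "b (ws x div 2) x = b (ws x div 2) y" using xy(3) eqw by (simp add: \<phi>_def)
      ultimately show "x = y" using bij_betw_imp_inj_on[OF b] by (meson inj_onD)
    qed
    show "\<phi> ` S = T"
    proof
      show "\<phi> ` S \<subseteq> T" using img by auto
      show "T \<subseteq> \<phi> ` S"
      proof
        fix y assume y: "y \<in> T"
        then have "y \<in> b (wt y) ` {x \<in> S. ws x = 2 * wt y}" using b[of "wt y"]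
          by (simp add: bij_betw_def)
        then obtain x where x: "x \<in> S" "ws x = 2 * wt y" "y = b (wt y) x" by auto
        then have "\<phi> x = y" by (simp add: \<phi>_def)
        then show "y \<in> \<phi> ` S" using x by auto
      qed
    qed
  qed
  moreover have "\<forall>x\<in>S. 2 * wt (\<phi> x) = ws x" using img ev by auto
  ultimately show ?thesis by blast
qed


fun gb :: "nat \<Rightarrow> nat \<Rightarrow> rat fps" where
  "gb 0 k = (if k = 0 then 1 else 0)"
| "gb (Suc n) k = (if k = 0 then 1 else fps_X ^ (2*k) * gb n k + gb n (k - 1))"

lemma gb_gt: "n < k \<Longrightarrow> gb n k = 0"
  by (induction n arbitrary: k) auto

lemma gb_0: "gb n 0 = 1"
  by (cases n) auto

lemma exp_aux: "2 * k + k * (k - 1) = (k + 1) * (k::nat)"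
  by (cases k) (auto simp: algebra_simps)

lemma qbin:
  fixes w z :: "rat fps"
  shows "(\<Prod>i<n. w + z * fps_X ^ (2*i)) = (\<Sum>k\<le>n. gb n k * fps_X ^ (k*(k-1)) * z ^ k * w ^ (n - k))"
proof (induction n arbitrary: z)
  case 0
  then show ?case by simp
next
  case (Suc n)
  define A where "A k = gb n k * fps_X ^ (k*(k+1)) * z ^ k * w ^ (n - k)" for k
  have "(\<Prod>i<Suc n. w + z * fps_X ^ (2*i)) = (w + z) * (\<Prod>i<n. w + (z * fps_X^2) * fps_X ^ (2*i))"
  proof (subst prod.lessThan_Suc_shift)
    have "fps_X ^ (2 * Suc i) = fps_X^2 * (fps_X ^ (2*i) :: rat fps)" for i
      by (simp add: power_add[symmetric])
    then have "z * fps_X ^ (2 * Suc i) = z * fps_X^2 * (fps_X ^ (2*i) :: rat fps)" for i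
      by (simp add: mult.assoc)
    then show "(w + z * fps_X ^ (2 * 0)) * (\<Prod>i<n. w + z * fps_X ^ (2 * Suc i)) =
      (w + z) * (\<Prod>i<n. w + z * fps_X\<^sup>2 * fps_X ^ (2 * i))"
      by (simp only: mult_0_right power_0 mult_1_right)
  qed
  also have "\<dots> = (w + z) * (\<Sum>k\<le>n. gb n k * fps_X ^ (k*(k-1)) * (z * fps_X^2) ^ k * w ^ (n - k))"
    by (simp add: Suc)
  also have "(\<Sum>k\<le>n. gb n k * fps_X ^ (k*(k-1)) * (z * fps_X^2) ^ k * w ^ (n - k)) = (\<Sum>k\<le>n. A k)"
  proof (rule sum.cong[OF refl])
    fix k
    have H: "fps_X ^ (k*(k-1)) * (z * fps_X^2) ^ k = z ^ k * (fps_X ^ (k*(k+1)) :: rat fps)"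
    proof -
      have "(z * fps_X^2) ^ k = z ^ k * (fps_X ^ (2*k) :: rat fps)"
        by (simp add: power_mult_distrib power_mult)
      moreover have "fps_X ^ (k*(k-1)) * (fps_X ^ (2*k) :: rat fps) = fps_X ^ (k*(k+1))"
        using exp_aux[of k] by (simp add: power_add[symmetric] mult.commute)
      ultimately show ?thesis by (metis mult.left_commute)
    qed
    have "gb n k * fps_X ^ (k*(k-1)) * (z * fps_X^2) ^ k * w ^ (n - k)
        = gb n k * (fps_X ^ (k*(k-1)) * (z * fps_X^2) ^ k) * w ^ (n - k)" by (simp only: mult.assoc)
    also have "\<dots> = gb n k * (z ^ k * fps_X ^ (k*(k+1))) * w ^ (n - k)" by (simp only: H)
    also have "\<dots> = A k" by (simp only: A_def mult_ac)
    finally show "gb n k * fps_X ^ (k*(k-1)) * (z * fps_X^2) ^ k * w ^ (n - k) = A k" .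
  qed
  finally have L: "(\<Prod>i<Suc n. w + z * fps_X ^ (2*i)) = w * (\<Sum>k\<le>n. A k) + z * (\<Sum>k\<le>n. A k)"
    by (simp add: algebra_simps)
  define B where "B k = gb n k * fps_X ^ (k*(k+1)) * z ^ k * w ^ (Suc n - k)" for k
  define C where "C k = (if k = 0 then 0 else gb n (k-1) * fps_X ^ (k*(k-1)) * z ^ k * w ^ (Suc n - k))" for k
  have R: "(\<Sum>k\<le>Suc n. gb (Suc n) k * fps_X ^ (k*(k-1)) * z ^ k * w ^ (Suc n - k)) = (\<Sum>k\<le>Suc n. B k + C k)"
  proof (rule sum.cong[OF refl])
    fix k
    show "gb (Suc n) k * fps_X ^ (k*(k-1)) * z ^ k * w ^ (Suc n - k) = B k + C k"
    proof (cases "k = 0")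
      case True
      then show ?thesis by (simp add: B_def C_def gb_0)
    next
      case False
      have "fps_X ^ (2*k) * fps_X ^ (k*(k-1)) = (fps_X ^ (k*(k+1)) :: rat fps)"
        by (simp add: power_add[symmetric] exp_aux[simplified] algebra_simps)
      then show ?thesis using False
        by (simp add: B_def C_def algebra_simps)
    qed
  qed
  have B1: "(\<Sum>k\<le>Suc n. B k) = w * (\<Sum>k\<le>n. A k)"
  proof -
    have "(\<Sum>k\<le>Suc n. B k) = (\<Sum>k\<le>n. B k)" by (simp add: B_def gb_gt)
    also have "\<dots> = (\<Sum>k\<le>n. w * A k)"
      by (intro sum.cong refl) (simp add: A_def B_def Suc_diff_le algebra_simps)
    finally show ?thesis by (simp add: sum_distrib_left)
  qed
  have C1: "(\<Sum>k\<le>Suc n. C k) = z * (\<Sum>k\<le>n. A k)"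
  proof -
    have "(\<Sum>k\<le>Suc n. C k) = (\<Sum>k\<le>n. C (Suc k))" by (subst sum.atMost_Suc_shift) (simp add: C_def)
    also have "\<dots> = (\<Sum>k\<le>n. z * A k)"
      by (intro sum.cong refl) (simp add: A_def C_def algebra_simps)
    finally show ?thesis by (simp add: sum_distrib_left)
  qed
  show ?case using L R B1 C1 by (simp add: sum.distrib)
qed

definition Qp :: "nat \<Rightarrow> rat fps" where
  "Qp j = (\<Prod>i\<in>{1..j}. 1 - fps_X ^ (2*i))"

lemma Qp_0[simp]: "Qp 0 = 1" by (simp add: Qp_def)
lemma Qp_Suc: "Qp (Suc j) = Qp j * (1 - fps_X ^ (2 * Suc j))"
  by (simp add: Qp_def atLeastAtMostSuc_conv mult.commute)
lemma Qp_nth0: "Qp j $ 0 = 1"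
  by (induction j) (auto simp: Qp_Suc)

lemma gb_prod: "k \<le> n \<Longrightarrow> gb n k * Qp k * Qp (n - k) = Qp n"
proof (induction n arbitrary: k)
  case 0
  then show ?case by simp
next
  case (Suc n)
  show ?case
  proof (cases k)
    case 0
    then show ?thesis by simp
  next
    case (Suc j)
    show ?thesis
    proof (cases "j = n")
      case True
      have "gb n n * Qp n * Qp 0 = Qp n" using Suc.IH[of n] by simp
      moreover have "Qp n \<noteq> 0" using Qp_nth0[of n] by auto
      ultimately have "gb n n = 1" by (metis Qp_0 mult_cancel_right2 mult.right_neutral)
      then show ?thesis using True \<open>k = Suc j\<close>
        by (simp add: gb_gt Qp_Suc mult.assoc)
    next
      case False
      then have jn: "j < n" using Suc.prems \<open>k = Suc j\<close> by auto
      have I1: "gb n (Suc j) * Qp (Suc j) * Qp (n - Suc j) = Qp n" using Suc.IH[of "Suc j"] jn by simp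
      have I0: "gb n j * Qp j * Qp (n - j) = Qp n" using Suc.IH[of j] jn by simp
      have nj: "n - j = Suc (n - Suc j)" using jn by simp
      have e: "2 * Suc j + 2 * Suc (n - Suc j) = 2 * Suc n" using jn by simp
      have "gb (Suc n) k * Qp k * Qp (Suc n - k)
          = (fps_X ^ (2 * Suc j) * gb n (Suc j) + gb n j) * (Qp j * (1 - fps_X ^ (2 * Suc j))) * Qp (n - j)"
        using \<open>k = Suc j\<close> by (simp add: Qp_Suc)
      also have "\<dots> = fps_X ^ (2 * Suc j) * (gb n (Suc j) * Qp (Suc j) * Qp (n - Suc j)) * (1 - fps_X ^ (2 * Suc (n - Suc j)))
                     + (gb n j * Qp j * Qp (n - j)) * (1 - fps_X ^ (2 * Suc j))"
        unfolding nj Qp_Suc by (simp add: algebra_simps)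
      also have "\<dots> = Qp n * (1 - fps_X ^ (2 * Suc j) * fps_X ^ (2 * Suc (n - Suc j)))"
        unfolding I1 I0 by (simp add: algebra_simps)
      also have "\<dots> = Qp (Suc n)"
        unfolding power_add[symmetric] e Qp_Suc ..
      finally show ?thesis .
    qed
  qed
qed


definition sg :: "rat \<Rightarrow> int \<Rightarrow> rat" where
  "sg s j = (if even j then 1 else s)"

lemma exp2:
  assumes "k \<le> 2*N"
  shows "k*(k-1) + (2*N-1)*(2*N-k) = N*(N-1) + N*(2*N-1) + nat ((int k - int N)^2)"
proof -
  have A: "int (k*(k-1)) = int k * (int k - 1)" by (cases k) (auto simp: algebra_simps)
  have B: "int ((2*N-1)*(2*N-k)) = (2 * int N - 1) * (2 * int N - int k)"
  proof (cases "N = 0")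
    case True then show ?thesis using assms by simp
  next
    case False
    have B1: "int (2*N-k) = 2*int N - int k" using assms by simp
    have B2: "int (2*N-1) = 2*int N - 1" using False by simp
    show ?thesis by (simp only: of_nat_mult B1 B2)
  qed
  have C: "int (N*(N-1)) = int N * (int N - 1)" by (cases N) (auto simp: algebra_simps)
  have D': "int (N*(2*N-1)) = int N * (2 * int N - 1)" by (cases N) (auto simp: algebra_simps)
  have E: "int (nat ((int k - int N)^2)) = (int k - int N)^2" by simp
  have "int (k*(k-1) + (2*N-1)*(2*N-k)) = int (N*(N-1) + N*(2*N-1) + nat ((int k - int N)^2))"
    unfolding of_nat_add A B C D' E by (simp add: algebra_simps power2_eq_square)
  then show ?thesis by (simp only: of_nat_eq_iff)
qed

lemma sum_double: "(\<Sum>i<N. 2*i) = N*(N-1::nat)"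
  by (induction N) (auto simp: algebra_simps)

lemma pow_sg: assumes "s * s = 1" shows "s ^ n = sg s (int n)"
proof (cases "even n")
  case True
  then obtain m where m: "n = 2*m" by blast
  have "s ^ n = (s*s) ^ m" unfolding m by (simp add: power_mult power2_eq_square)
  then show ?thesis using assms True by (simp add: sg_def)
next
  case False
  then obtain m where m: "n = 2*m+1" by (metis oddE)
  have "s ^ n = (s*s) ^ m * s" unfolding m by (simp add: power_mult power2_eq_square)
  then show ?thesis using assms False by (simp add: sg_def)
qed

lemma finJTP:
  fixes s :: rat
  assumes ss: "s * s = 1"
  shows "(\<Prod>k\<in>{1..N}. 1 + fps_const s * fps_X ^ (2*k-1))^2
       = (\<Sum>k\<le>2*N. gb (2*N) k * fps_const (sg s (int k - int N)) * fps_X ^ (nat ((int k - int N)^2)))"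
proof -
  define c where "c = fps_const s"
  have cc: "c * c = 1" unfolding c_def fps_const_mult ss by simp
  define P where "P = (\<Prod>k\<in>{1..N}. 1 + c * fps_X ^ (2*k-1))"
  define E where "E = N*(N-1) + N*(2*N-1)"
  have q: "(\<Prod>i<2*N. fps_X^(2*N-1) + c * fps_X ^ (2*i))
      = (\<Sum>k\<le>2*N. gb (2*N) k * fps_X ^ (k*(k-1)) * c ^ k * (fps_X^(2*N-1)) ^ (2*N - k))"
    by (rule qbin)
  have split: "{..<2*N} = {..<N} \<union> {N..<2*N}" by auto
  have P1: "(\<Prod>i<N. fps_X^(2*N-1) + c * fps_X ^ (2*i)) = c^N * fps_X ^ (N*(N-1)) * P"
  proof -
    have "(\<Prod>i<N. fps_X^(2*N-1) + c * fps_X ^ (2*i)) = (\<Prod>i<N. (c * fps_X ^ (2*i)) * (1 + c * fps_X ^ (2*N-1-2*i)))"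
    proof (rule prod.cong[OF refl])
      fix i assume "i \<in> {..<N}"
      then have "2*i + (2*N-1-2*i) = 2*N-1" by auto
      then have "fps_X^(2*N-1) = fps_X ^ (2*i) * (fps_X ^ (2*N-1-2*i) :: rat fps)"
        by (metis power_add)
      then show "fps_X^(2*N-1) + c * fps_X ^ (2*i) = (c * fps_X ^ (2*i)) * (1 + c * fps_X ^ (2*N-1-2*i))"
        using cc by (simp add: algebra_simps)
    qed
    also have "\<dots> = c^N * fps_X ^ (\<Sum>i<N. 2*i) * (\<Prod>i<N. 1 + c * fps_X ^ (2*N-1-2*i))"
      by (simp add: prod.distrib power_sum)
    also have "(\<Prod>i<N. 1 + c * fps_X ^ (2*N-1-2*i)) = P"
      unfolding P_def
      by (rule prod.reindex_bij_witness[of _ "\<lambda>k. N - k" "\<lambda>i. N - i"]) auto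
    finally show ?thesis by (simp add: sum_double)
  qed
  have P2: "(\<Prod>i\<in>{N..<2*N}. fps_X^(2*N-1) + c * fps_X ^ (2*i)) = fps_X ^ (N*(2*N-1)) * P"
  proof -
    have "(\<Prod>i\<in>{N..<2*N}. fps_X^(2*N-1) + c * fps_X ^ (2*i)) = (\<Prod>i\<in>{N..<2*N}. fps_X^(2*N-1) * (1 + c * fps_X ^ (2*i+1-2*N)))"
    proof (rule prod.cong[OF refl])
      fix i assume "i \<in> {N..<2*N}"
      then have "2*N-1 + (2*i+1-2*N) = 2*i" by auto
      then have "fps_X^(2*i) = fps_X ^ (2*N-1) * (fps_X ^ (2*i+1-2*N) :: rat fps)"
        by (metis power_add)
      then show "fps_X^(2*N-1) + c * fps_X ^ (2*i) = fps_X^(2*N-1) * (1 + c * fps_X ^ (2*i+1-2*N))"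
        by (simp add: algebra_simps)
    qed
    also have "\<dots> = fps_X ^ (N*(2*N-1)) * (\<Prod>i\<in>{N..<2*N}. 1 + c * fps_X ^ (2*i+1-2*N))"
      by (simp add: prod.distrib power_mult[symmetric] mult.commute)
    also have "(\<Prod>i\<in>{N..<2*N}. 1 + c * fps_X ^ (2*i+1-2*N)) = P"
      unfolding P_def
      by (rule prod.reindex_bij_witness[of _ "\<lambda>k. k + N - 1" "\<lambda>i. i + 1 - N"]) auto
    finally show ?thesis .
  qed
  have LHS: "(\<Prod>i<2*N. fps_X^(2*N-1) + c * fps_X ^ (2*i)) = c^N * fps_X ^ E * P^2"
  proof -
    have "(\<Prod>i<2*N. fps_X^(2*N-1) + c * fps_X ^ (2*i)) = (\<Prod>i<N. fps_X^(2*N-1) + c * fps_X ^ (2*i)) * (\<Prod>i\<in>{N..<2*N}. fps_X^(2*N-1) + c * fps_X ^ (2*i))"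
      unfolding split by (rule prod.union_disjoint) auto
    also have "\<dots> = (c^N * fps_X ^ (N*(N-1)) * P) * (fps_X ^ (N*(2*N-1)) * P)"
      by (simp only: P1 P2)
    also have "\<dots> = c^N * (fps_X ^ (N*(N-1)) * fps_X ^ (N*(2*N-1))) * (P * P)"
      by (simp only: mult_ac)
    also have "\<dots> = c^N * fps_X ^ E * P^2"
      by (simp only: E_def power_add[symmetric] power2_eq_square)
    finally show ?thesis .
  qed
  have RHS: "(\<Sum>k\<le>2*N. gb (2*N) k * fps_X ^ (k*(k-1)) * c ^ k * (fps_X^(2*N-1)) ^ (2*N - k))
      = fps_X ^ E * (\<Sum>k\<le>2*N. gb (2*N) k * c ^ k * fps_X ^ (nat ((int k - int N)^2)))"
    unfolding sum_distrib_left
  proof (rule sum.cong[OF refl])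
    fix k assume "k \<in> {..2*N}"
    then have e: "k*(k-1) + (2*N-1)*(2*N-k) = E + nat ((int k - int N)^2)"
      unfolding E_def by (intro exp2) auto
    have "fps_X ^ (k*(k-1)) * (fps_X^(2*N-1)) ^ (2*N - k) = fps_X ^ E * (fps_X ^ (nat ((int k - int N)^2)) :: rat fps)"
      by (simp only: power_mult[symmetric] power_add[symmetric] e)
    then show "gb (2*N) k * fps_X ^ (k*(k-1)) * c ^ k * (fps_X^(2*N-1)) ^ (2*N - k)
        = fps_X ^ E * (gb (2*N) k * c ^ k * fps_X ^ (nat ((int k - int N)^2)))"
      by (metis (no_types, lifting) mult.assoc mult.commute mult.left_commute)
  qed
  define S where "S = (\<Sum>k\<le>2*N. gb (2*N) k * c ^ k * fps_X ^ (nat ((int k - int N)^2)))"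
  have H: "c^N * fps_X ^ E * P^2 = fps_X ^ E * S"
    using q LHS RHS by (simp add: S_def)
  have ccN: "c^N * c^N = 1" using cc by (metis power_mult_distrib power_one)
  have "fps_X ^ E * P^2 = (c^N * c^N) * (fps_X ^ E * P^2)" using ccN by simp
  also have "\<dots> = c^N * (c^N * fps_X ^ E * P^2)" by (simp only: mult_ac)
  also have "\<dots> = c^N * (fps_X ^ E * S)" by (simp only: H)
  also have "\<dots> = fps_X ^ E * (c^N * S)" by (simp only: mult_ac)
  also have "\<dots> = fps_X ^ E * (\<Sum>k\<le>2*N. c^N * (gb (2*N) k * c ^ k * fps_X ^ (nat ((int k - int N)^2))))"
    by (simp only: S_def sum_distrib_left)
  finally have "fps_X ^ E * P^2 = fps_X ^ E * (\<Sum>k\<le>2*N. c^N * (gb (2*N) k * c ^ k * fps_X ^ (nat ((int k - int N)^2))))" .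
  then have "P^2 = (\<Sum>k\<le>2*N. c^N * (gb (2*N) k * c ^ k * fps_X ^ (nat ((int k - int N)^2))))"
    by simp
  also have "\<dots> = (\<Sum>k\<le>2*N. gb (2*N) k * fps_const (sg s (int k - int N)) * fps_X ^ (nat ((int k - int N)^2)))"
  proof (rule sum.cong[OF refl])
    fix k
    have "c^N * c^k = fps_const (s ^ (k + N))" by (simp add: c_def power_add fps_const_power mult.commute)
    also have "s ^ (k + N) = sg s (int k - int N)"
      using pow_sg[OF ss, of "k+N"] by (simp add: sg_def)
    finally have cN: "c^N * c^k = fps_const (sg s (int k - int N))" .
    have "c^N * (gb (2*N) k * c ^ k * fps_X ^ (nat ((int k - int N)^2)))
        = gb (2*N) k * (c^N * c ^ k) * fps_X ^ (nat ((int k - int N)^2))" by (simp only: mult_ac)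
    then show "c^N * (gb (2*N) k * c ^ k * fps_X ^ (nat ((int k - int N)^2)))
        = gb (2*N) k * fps_const (sg s (int k - int N)) * fps_X ^ (nat ((int k - int N)^2))"
      by (simp only: cN)
  qed
  finally show ?thesis unfolding P_def c_def .
qed


definition th :: "rat \<Rightarrow> rat fps" where
  "th s = Abs_fps (\<lambda>n. \<Sum>j\<in>{j::int. j*j = int n}. sg s j)"

definition Usp :: "rat \<Rightarrow> rat fps" where
  "Usp s = iprod (\<lambda>k. 1 + fps_const s * fps_X ^ (2*k-1))"

lemma good_Usp: "good (\<lambda>k. 1 + fps_const s * fps_X ^ (2*k-1))"
proof (rule good_intro)
  fix k :: nat assume "0 < k"
  then show "\<exists>e c. k \<le> e \<and> 1 + fps_const s * fps_X ^ (2*k-1) = 1 + c * fps_X ^ e"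
    by (intro exI[of _ "2*k-1"] exI[of _ "fps_const s"]) auto
qed

lemma f_fps_iprod: "f_fps i = iprod (\<lambda>k. 1 - fps_X ^ (i*k))"
  unfolding f_fps_def iprod_def ..

lemma good_f: "0 < i \<Longrightarrow> good (\<lambda>k. 1 - fps_X ^ (i*k))"
proof (rule good_intro)
  fix k :: nat assume h: "0 < i" "0 < k"
  have "k \<le> i*k \<and> (1::rat fps) - fps_X ^ (i*k) = 1 + (-1 :: rat fps) * fps_X ^ (i*k)" using h by simp
  then show "\<exists>e (c::rat fps). k \<le> e \<and> 1 - fps_X ^ (i*k) = 1 + c * fps_X ^ e" by blast
qed

lemma f_fps_nth0: "f_fps i $ 0 = 1"
  by (simp add: f_fps_iprod iprod_0)

lemma f2_Qp: "m \<le> j \<Longrightarrow> eqm m (f_fps 2) (Qp j)"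
  unfolding f_fps_iprod Qp_def by (rule iprod_eqm[OF good_f]) auto

lemma mult_eq_inverse:
  fixes A B C :: "rat fps"
  assumes "A * B = C" "B $ 0 \<noteq> 0"
  shows "A = C * inverse B"
proof -
  have "A = A * (B * inverse B)" using assms(2) by (simp add: inverse_mult_eq_1')
  also have "\<dots> = C * inverse B" using assms(1) by (simp only: mult.assoc[symmetric])
  finally show ?thesis .
qed

lemma gb_lim:
  assumes "m \<le> k" "m \<le> 2*N - k" "k \<le> 2*N"
  shows "eqm m (gb (2*N) k) (inverse (f_fps 2))"
proof -
  have "gb (2*N) k * (Qp k * Qp (2*N-k)) = Qp (2*N)"
    using gb_prod[OF assms(3)] by (simp add: mult.assoc)
  moreover have "(Qp k * Qp (2*N-k)) $ 0 \<noteq> 0" by (simp add: Qp_nth0)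
  ultimately have e: "gb (2*N) k = Qp (2*N) * inverse (Qp k * Qp (2*N-k))"
    by (rule mult_eq_inverse)
  have "eqm m (Qp (2*N) * inverse (Qp k * Qp (2*N-k))) (f_fps 2 * inverse (f_fps 2 * f_fps 2))"
  proof (rule eqm_mult)
    show "eqm m (Qp (2*N)) (f_fps 2)" using assms by (intro eqm_sym[OF f2_Qp]) auto
    have "eqm m (Qp k * Qp (2*N-k)) (f_fps 2 * f_fps 2)"
      using assms by (intro eqm_mult eqm_sym[OF f2_Qp]) auto
    then show "eqm m (inverse (Qp k * Qp (2*N-k))) (inverse (f_fps 2 * f_fps 2))"
      by (rule eqm_inverse) (simp add: Qp_nth0)
  qed
  moreover have "f_fps 2 * inverse (f_fps 2 * f_fps 2) = inverse (f_fps 2)"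
  proof -
    have "f_fps 2 * inverse (f_fps 2 * f_fps 2) = (f_fps 2 * inverse (f_fps 2)) * inverse (f_fps 2)"
      by (simp add: fps_inverse_mult mult.assoc)
    also have "\<dots> = inverse (f_fps 2)" by (simp add: inverse_mult_eq_1' f_fps_nth0)
    finally show ?thesis .
  qed
  ultimately show ?thesis using e by simp
qed

lemma th_trunc:
  assumes "n \<le> N"
  shows "(\<Sum>k\<le>2*N. fps_const (sg s (int k - int N)) * fps_X ^ (nat ((int k - int N)^2))) $ n = th s $ n"
proof -
  have "(\<Sum>k\<le>2*N. fps_const (sg s (int k - int N)) * fps_X ^ (nat ((int k - int N)^2))) $ n
      = (\<Sum>k\<le>2*N. if n = nat ((int k - int N)^2) then sg s (int k - int N) else 0)"
    by (auto simp: fps_sum_nth intro!: sum.cong)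
  also have "\<dots> = (\<Sum>k\<in>{k\<in>{..2*N}. n = nat ((int k - int N)^2)}. sg s (int k - int N))"
    by (rule sum.inter_filter[symmetric]) simp
  also have "\<dots> = (\<Sum>j\<in>{j::int. j*j = int n}. sg s j)"
  proof (rule sum.reindex_bij_witness[of _ "\<lambda>j. nat (j + int N)" "\<lambda>k. int k - int N"])
    fix j assume j: "j \<in> {j::int. j*j = int n}"
    have "\<bar>j\<bar> \<le> j*j"
    proof (cases "j = 0")
      case False
      then have "1 \<le> \<bar>j\<bar>" by simp
      then have "\<bar>j\<bar> * 1 \<le> \<bar>j\<bar> * \<bar>j\<bar>" by (intro mult_left_mono) auto
      then show ?thesis by (simp add: abs_mult_self_eq)
    qed simp
    then have "\<bar>j\<bar> \<le> int N" using j assms by auto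
    then show "int (nat (j + int N)) - int N = j" by simp
    show "nat (j + int N) \<in> {k \<in> {..2*N}. n = nat ((int k - int N)^2)}"
      using \<open>\<bar>j\<bar> \<le> int N\<close> j by (auto simp: power2_eq_square)
  next
    fix k assume k: "k \<in> {k \<in> {..2*N}. n = nat ((int k - int N)^2)}"
    then show "nat (int k - int N + int N) = k" by simp
    show "int k - int N \<in> {j::int. j*j = int n}" using k by (auto simp: power2_eq_square)
  qed simp
  finally show ?thesis by (simp add: th_def)
qed


lemma abs_le_sq: "\<bar>j::int\<bar> \<le> j*j"
proof (cases "j = 0")
  case False
  then have "1 \<le> \<bar>j\<bar>" by simp
  then have "\<bar>j\<bar> * 1 \<le> \<bar>j\<bar> * \<bar>j\<bar>" by (intro mult_left_mono) auto
  then show ?thesis by (simp add: abs_mult_self_eq)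
qed simp

lemma gauss:
  fixes s :: rat
  assumes ss: "s * s = 1"
  shows "f_fps 2 * Usp s ^ 2 = th s"
proof (rule eqm_all)
  fix m
  define N :: nat where "N = 2*m+1"
  define T where "T k = fps_const (sg s (int k - int N)) * fps_X ^ (nat ((int k - int N)^2))" for k
  have i: "eqm m (Usp s ^ 2) ((\<Prod>k\<in>{1..N}. 1 + fps_const s * fps_X ^ (2*k-1))^2)"
    unfolding Usp_def by (intro eqm_power iprod_eqm[OF good_Usp]) (simp add: N_def)
  have ii: "(\<Prod>k\<in>{1..N}. 1 + fps_const s * fps_X ^ (2*k-1))^2 = (\<Sum>k\<le>2*N. gb (2*N) k * T k)"
    unfolding finJTP[OF ss] T_def by (simp add: mult.assoc)
  have iii: "eqm m (\<Sum>k\<le>2*N. gb (2*N) k * T k) (\<Sum>k\<le>2*N. inverse (f_fps 2) * T k)"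
  proof (rule eqm_sum)
    fix k assume k: "k \<in> {..2*N}"
    show "eqm m (gb (2*N) k * T k) (inverse (f_fps 2) * T k)"
    proof (cases "nat ((int k - int N)^2) \<le> m")
      case True
      have "\<bar>int k - int N\<bar> \<le> (int k - int N) * (int k - int N)" by (rule abs_le_sq)
      then have "\<bar>int k - int N\<bar> \<le> int m" using True by (simp add: power2_eq_square)
      then have "m \<le> k" "m \<le> 2*N - k" using k unfolding N_def by auto
      then have "eqm m (gb (2*N) k) (inverse (f_fps 2))" using k by (intro gb_lim) auto
      then show ?thesis by (rule eqm_mult) simp
    next
      case False
      have z: "eqm m (fps_X ^ nat ((int k - int N)^2) * A) 0" for A
        using False by (intro eqm_Xpow_mult) auto
      have A: "eqm m (gb (2*N) k * T k) 0" using z[of "gb (2*N) k * fps_const (sg s (int k - int N))"]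
        by (simp add: T_def mult_ac)
      have B: "eqm m (inverse (f_fps 2) * T k) 0" using z[of "inverse (f_fps 2) * fps_const (sg s (int k - int N))"]
        by (simp add: T_def mult_ac)
      show ?thesis by (rule eqm_trans[OF A eqm_sym[OF B]])
    qed
  qed
  have iv: "eqm m (\<Sum>k\<le>2*N. T k) (th s)"
    unfolding eqm_def T_def
  proof (intro allI impI)
    fix i assume "i \<le> m"
    then have "i \<le> N" by (simp add: N_def)
    then show "(\<Sum>k\<le>2*N. fps_const (sg s (int k - int N)) * fps_X ^ (nat ((int k - int N)^2))) $ i = th s $ i"
      by (rule th_trunc)
  qed
  have "eqm m (Usp s ^ 2) (inverse (f_fps 2) * th s)"
  proof -
    have "eqm m (Usp s ^ 2) (\<Sum>k\<le>2*N. inverse (f_fps 2) * T k)"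
      using eqm_trans[OF i[unfolded ii] iii] .
    moreover have "(\<Sum>k\<le>2*N. inverse (f_fps 2) * T k) = inverse (f_fps 2) * (\<Sum>k\<le>2*N. T k)"
      by (simp add: sum_distrib_left)
    moreover have "eqm m (inverse (f_fps 2) * (\<Sum>k\<le>2*N. T k)) (inverse (f_fps 2) * th s)"
      using iv by (intro eqm_mult) auto
    ultimately show ?thesis by (metis eqm_trans)
  qed
  then have "eqm m (f_fps 2 * Usp s ^ 2) (f_fps 2 * (inverse (f_fps 2) * th s))"
    by (intro eqm_mult) auto
  moreover have "f_fps 2 * (inverse (f_fps 2) * th s) = th s"
    by (simp add: mult.assoc[symmetric] inverse_mult_eq_1' f_fps_nth0)
  ultimately show "eqm m (f_fps 2 * Usp s ^ 2) (th s)" by simp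
qed


definition Bset :: "nat \<Rightarrow> (int \<times> int) set" where
  "Bset n = {(a,b). a*a + b*b = int n}"

lemma sqset_fin: "finite {j::int. j*j = int n}"
proof -
  have "{j::int. j*j = int n} \<subseteq> {-int n..int n}"
  proof
    fix x assume "x \<in> {j::int. j*j = int n}"
    then have "\<bar>x\<bar> \<le> int n" using abs_le_sq[of x] by simp
    then show "x \<in> {-int n..int n}" by auto
  qed
  then show ?thesis by (rule finite_subset) simp
qed

lemma Bset_fin: "finite (Bset n)"
proof -
  have "Bset n \<subseteq> {-int n..int n} \<times> {-int n..int n}"
  proof
    fix p assume "p \<in> Bset n"
    then obtain a b where p: "p = (a,b)" "a*a + b*b = int n" by (auto simp: Bset_def)
    have "a*a \<ge> 0" "b*b \<ge> 0" by auto
    then have "\<bar>a\<bar> \<le> int n" "\<bar>b\<bar> \<le> int n" using abs_le_sq[of a] abs_le_sq[of b] p by linarith+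
    then show "p \<in> {-int n..int n} \<times> {-int n..int n}" using p by auto
  qed
  then show ?thesis by (rule finite_subset) simp
qed

lemma thth: "(th s * th t) $ n = (\<Sum>(a,b)\<in>Bset n. sg s a * sg t b)"
proof -
  define A where "A i = {j::int. j*j = int i}" for i
  have "(th s * th t) $ n = (\<Sum>i=0..n. (\<Sum>a\<in>A i. sg s a) * (\<Sum>b\<in>A (n-i). sg t b))"
    by (simp add: fps_mult_nth th_def A_def)
  also have "\<dots> = (\<Sum>i=0..n. \<Sum>p\<in>A i \<times> A (n-i). sg s (fst p) * sg t (snd p))"
    by (simp add: sum_product sum.cartesian_product case_prod_beta)
  also have "\<dots> = (\<Sum>p\<in>(\<Union>i\<in>{0..n}. A i \<times> A (n-i)). sg s (fst p) * sg t (snd p))"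
  proof (rule sum.UNION_disjoint[symmetric])
    have fA: "finite (A i)" for i unfolding A_def by (rule sqset_fin)
    show "finite {0..n}" by simp
    show "\<forall>i\<in>{0..n}. finite (A i \<times> A (n - i))" using fA by simp
    show "\<forall>i\<in>{0..n}. \<forall>j\<in>{0..n}. i \<noteq> j \<longrightarrow> A i \<times> A (n - i) \<inter> A j \<times> A (n - j) = {}"
      by (auto simp: A_def)
  qed
  also have "(\<Union>i\<in>{0..n}. A i \<times> A (n-i)) = Bset n"
  proof (intro set_eqI iffI)
    fix p assume "p \<in> (\<Union>i\<in>{0..n}. A i \<times> A (n-i))"
    then show "p \<in> Bset n" by (auto simp: A_def Bset_def)
  next
    fix p assume "p \<in> Bset n"
    then obtain a b where p: "p = (a,b)" "a*a + b*b = int n" by (auto simp: Bset_def)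
    have "a*a \<ge> 0" "b*b \<ge> 0" by auto
    then have n1: "a*a \<le> int n" using p by linarith
    have "nat (a*a) \<le> n" using n1 by (simp add: nat_le_iff)
    then have "nat (a*a) \<in> {0..n}" "a*a = int (nat (a*a))" "b*b = int (n - nat (a*a))"
      using p \<open>a*a \<ge> 0\<close> by (auto simp: of_nat_diff)
    then show "p \<in> (\<Union>i\<in>{0..n}. A i \<times> A (n-i))" using p unfolding A_def by blast
  qed
  finally show ?thesis by (simp add: case_prod_beta)
qed

lemma even_sq_sum: "even (c*c + d*d) \<longleftrightarrow> even (c + (d::int))"
  by auto

lemma Bset_double:
  "card (Bset (2*n)) = card (Bset n)"
proof -
  have "(\<Sum>p\<in>Bset (2*n). (1::nat)) = (\<Sum>p\<in>Bset n. 1)"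
  proof (rule sum.reindex_bij_witness[of _ "\<lambda>(a,b). (a+b, a-b)" "\<lambda>(c,d). ((c+d) div 2, (c-d) div 2)"])
    fix p assume p: "p \<in> Bset (2*n)"
    then obtain c d where cd: "p = (c,d)" "c*c + d*d = 2 * int n" by (auto simp: Bset_def)
    then have "even (c + d)" using even_sq_sum[of c d] by simp
    then obtain u where u: "c + d = 2*u" by blast
    then have v: "c - d = 2*(u - d)" by simp
    show "(\<lambda>(a,b). (a+b, a-b)) ((\<lambda>(c,d). ((c+d) div 2, (c-d) div 2)) p) = p"
      using cd u v by auto
    have "(2*u)*(2*u) + (2*(u-d))*(2*(u-d)) = 2 * (c*c + d*d)" 
    proof -
      have c: "c = 2*u - d" using u by simp
      show ?thesis unfolding c by (simp add: algebra_simps)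
    qed
    then have "u*u + (u-d)*(u-d) = int n" using cd by (simp add: algebra_simps)
    moreover have "(c - d) div 2 = u - d" "(c + d) div 2 = u" using u v by simp_all
    ultimately show "(\<lambda>(c,d). ((c+d) div 2, (c-d) div 2)) p \<in> Bset n"
      using cd by (simp add: Bset_def)
  next
    fix p assume p: "p \<in> Bset n"
    then obtain a b where ab: "p = (a,b)" "a*a + b*b = int n" by (auto simp: Bset_def)
    show "(\<lambda>(c,d). ((c+d) div 2, (c-d) div 2)) ((\<lambda>(a,b). (a+b, a-b)) p) = p"
      using ab by auto
    have "(a+b)*(a+b) + (a-b)*(a-b) = 2*(a*a+b*b)" by (simp add: algebra_simps)
    then show "(\<lambda>(a,b). (a+b, a-b)) p \<in> Bset (2*n)" using ab by (simp add: Bset_def)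
  qed simp
  then show ?thesis by simp
qed


definition Ev :: "rat fps \<Rightarrow> rat fps" where
  "Ev A = Abs_fps (\<lambda>n. A $ (2*n))"

definition comp2 :: "rat fps \<Rightarrow> rat fps" where
  "comp2 B = Abs_fps (\<lambda>n. if even n then B $ (n div 2) else 0)"

lemma sg1[simp]: "sg 1 j = 1" by (simp add: sg_def)

lemma thb: "Ev (th 1 * th 1) = th 1 * th 1"
proof (rule fps_ext)
  fix n
  show "Ev (th 1 * th 1) $ n = (th 1 * th 1) $ n"
    by (simp add: Ev_def thth case_prod_beta Bset_double)
qed

lemma sum_Q_zero:
  "(\<Sum>p\<in>{p\<in>Bset n. odd (fst p + snd p)}. sg (-1) (snd p)) = 0"
proof -
  let ?Q = "{p\<in>Bset n. odd (fst p + snd p)}"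
  have "(\<Sum>p\<in>?Q. sg (-1) (snd p)) = (\<Sum>p\<in>?Q. sg (-1) (fst p))"
    by (rule sum.reindex_bij_witness[of _ prod.swap prod.swap]) (auto simp: Bset_def add.commute)
  also have "\<dots> = (\<Sum>p\<in>?Q. - sg (-1) (snd p))"
    by (rule sum.cong) (auto simp: sg_def)
  finally show ?thesis by (simp add: sum_negf)
qed

lemma P_odd_empty: assumes "odd n" shows "{p\<in>Bset n. even (fst p + snd p)} = {}"
proof (rule ccontr)
  assume "{p\<in>Bset n. even (fst p + snd p)} \<noteq> {}"
  then obtain a b where ab: "a*a + b*b = int n" "even (a + b)" by (auto simp: Bset_def)
  then have "even (a*a + b*b)" using even_sq_sum by blast
  then have "even (int n)" using ab by simp
  then show False using assms by simp
qed

lemma sum_P_even: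
  "(\<Sum>p\<in>{p\<in>Bset (2*n). even (fst p + snd p)}. sg (-1) (snd p))
     = (\<Sum>(u,v)\<in>Bset n. sg (-1) u * sg (-1) v)"
proof (rule sum.reindex_bij_witness[of _ "\<lambda>(a,b). (a+b, a-b)" "\<lambda>(c,d). ((c+d) div 2, (c-d) div 2)"])
  fix p assume p: "p \<in> {p\<in>Bset (2*n). even (fst p + snd p)}"
  then obtain c d where cd: "p = (c,d)" "c*c + d*d = 2 * int n" "even (c + d)" by (auto simp: Bset_def)
  then obtain u where u: "c + d = 2*u" by blast
  then have v: "c - d = 2*(u - d)" by simp
  show "(\<lambda>(a,b). (a+b, a-b)) ((\<lambda>(c,d). ((c+d) div 2, (c-d) div 2)) p) = p"
    using cd u v by auto
  have "(2*u)*(2*u) + (2*(u-d))*(2*(u-d)) = 2 * (c*c + d*d)"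
  proof -
    have c: "c = 2*u - d" using u by simp
    show ?thesis unfolding c by (simp add: algebra_simps)
  qed
  then have "u*u + (u-d)*(u-d) = int n" using cd by (simp add: algebra_simps)
  moreover have "(c - d) div 2 = u - d" "(c + d) div 2 = u" using u v by simp_all
  ultimately show "(\<lambda>(c,d). ((c+d) div 2, (c-d) div 2)) p \<in> Bset n"
    using cd by (simp add: Bset_def)
  have "(c - d) div 2 = u - d" "(c + d) div 2 = u" using u v by simp_all
  then show "(\<lambda>(u,v). sg (-1) u * sg (-1) v) ((\<lambda>(c,d). ((c+d) div 2, (c-d) div 2)) p) = sg (-1) (snd p)"
    using cd by (auto simp: sg_def)
next
  fix p assume p: "p \<in> Bset n"
  then obtain a b where ab: "p = (a,b)" "a*a + b*b = int n" by (auto simp: Bset_def)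
  show "(\<lambda>(c,d). ((c+d) div 2, (c-d) div 2)) ((\<lambda>(a,b). (a+b, a-b)) p) = p"
    using ab by auto
  have "(a+b)*(a+b) + (a-b)*(a-b) = 2*(a*a+b*b)" by (simp add: algebra_simps)
  then show "(\<lambda>(a,b). (a+b, a-b)) p \<in> {p\<in>Bset (2*n). even (fst p + snd p)}"
    using ab by (simp add: Bset_def)
qed

lemma thc: "th 1 * th (-1) = comp2 (th (-1) * th (-1))"
proof (rule fps_ext)
  fix n
  let ?P = "{p\<in>Bset n. even (fst p + snd p)}"
  let ?Q = "{p\<in>Bset n. odd (fst p + snd p)}"
  have "(th 1 * th (-1)) $ n = (\<Sum>p\<in>Bset n. sg (-1) (snd p))"
    by (simp add: thth case_prod_beta)
  also have "Bset n = ?P \<union> ?Q" by auto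
  also have "(\<Sum>p\<in>?P \<union> ?Q. sg (-1) (snd p)) = (\<Sum>p\<in>?P. sg (-1) (snd p)) + (\<Sum>p\<in>?Q. sg (-1) (snd p))"
    by (rule sum.union_disjoint) (auto intro: finite_subset[OF _ Bset_fin])
  also have "\<dots> = (\<Sum>p\<in>?P. sg (-1) (snd p))" using sum_Q_zero[of n] by simp
  finally have L: "(th 1 * th (-1)) $ n = (\<Sum>p\<in>?P. sg (-1) (snd p))" .
  show "(th 1 * th (-1)) $ n = comp2 (th (-1) * th (-1)) $ n"
  proof (cases "even n")
    case True
    then obtain n' where n': "n = 2*n'" by blast
    show ?thesis using L sum_P_even[of n'] unfolding n' by (simp add: comp2_def thth)
  next
    case False
    have "(th 1 * th (-1)) $ n = 0" using L by (simp only: P_odd_empty[OF False] sum.empty)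
    then show ?thesis using False by (simp add: comp2_def)
  qed
qed

lemma Ev_comp2: "Ev (A * comp2 B) = Ev A * B"
proof (rule fps_ext)
  fix n
  define f where "f i = A $ i * comp2 B $ (2*n - i)" for i
  have "(Ev A * B) $ n = (\<Sum>j=0..n. A $ (2*j) * B $ (n - j))"
    by (simp add: fps_mult_nth Ev_def)
  also have "\<dots> = (\<Sum>j=0..n. f (2*j))"
    by (rule sum.cong) (auto simp: f_def comp2_def diff_mult_distrib2[symmetric])
  also have "\<dots> = (\<Sum>i\<in>(\<lambda>j. 2*j) ` {0..n}. f i)"
    by (simp add: sum.reindex inj_on_def)
  also have "\<dots> = (\<Sum>i=0..2*n. f i)"
  proof (rule sum.mono_neutral_left)
    show "(\<lambda>j. 2*j) ` {0..n} \<subseteq> {0..2*n}" by auto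
    show "\<forall>i\<in>{0..2*n} - (\<lambda>j. 2*j) ` {0..n}. f i = 0"
    proof
      fix i assume i: "i \<in> {0..2*n} - (\<lambda>j. 2*j) ` {0..n}"
      have "odd i"
      proof
        assume "even i"
        then obtain j where "i = 2*j" by blast
        then show False using i by auto
      qed
      then have "odd (2*n - i)" using i by auto
      then show "f i = 0" by (simp add: f_def comp2_def)
    qed
  qed simp
  also have "\<dots> = Ev (A * comp2 B) $ n"
    by (simp add: Ev_def fps_mult_nth f_def)
  finally show "Ev (A * comp2 B) $ n = (Ev A * B) $ n" ..
qed


lemma split_prod: fixes N :: nat shows "(\<Prod>k\<in>{1..2*N}. g k) = (\<Prod>k\<in>{1..N}. g (2*k-1)) * (\<Prod>k\<in>{1..N}. (g (2*k) :: rat fps))"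
proof (induction N)
  case 0
  then show ?case by simp
next
  case (Suc N)
  have e: "2 * Suc N = Suc (Suc (2*N))" by simp
  have "(\<Prod>k\<in>{1..2*Suc N}. g k) = (\<Prod>k\<in>{1..2*N}. g k) * g (Suc (2*N)) * g (Suc (Suc (2*N)))"
    unfolding e by (simp add: atLeastAtMostSuc_conv mult_ac)
  also have "\<dots> = ((\<Prod>k\<in>{1..N}. g (2*k-1)) * g (2 * Suc N - 1)) * ((\<Prod>k\<in>{1..N}. g (2*k)) * g (2 * Suc N))"
    using Suc by (simp add: mult_ac)
  also have "\<dots> = (\<Prod>k\<in>{1..Suc N}. g (2*k-1)) * (\<Prod>k\<in>{1..Suc N}. g (2*k))"
    by (simp add: atLeastAtMostSuc_conv mult_ac)
  finally show ?case .
qed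

abbreviation "Um \<equiv> Usp (-1)"
abbreviation "Up1 \<equiv> Usp 1"

lemma Up_eq: "Up = Up1"
  by (simp add: Up_def Usp_def)

lemma cm1: "1 + fps_const (-1::rat) * x = 1 - x"
  by (simp add: fps_eq_iff)

lemma Um_trunc: "m \<le> N \<Longrightarrow> eqm m Um (\<Prod>k\<in>{1..N}. 1 - fps_X ^ (2*k-1))"
  using iprod_eqm[OF good_Usp, of m N "-1"] by (simp only: Usp_def cm1)

lemma Up1_trunc: "m \<le> N \<Longrightarrow> eqm m Up1 (\<Prod>k\<in>{1..N}. 1 + fps_X ^ (2*k-1))"
  using iprod_eqm[OF good_Usp, of m N "1"] by (simp add: Usp_def)

lemma f_trunc: "0 < i \<Longrightarrow> m \<le> N \<Longrightarrow> eqm m (f_fps i) (\<Prod>k\<in>{1..N}. 1 - fps_X ^ (i*k))"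
  unfolding f_fps_iprod by (rule iprod_eqm[OF good_f])

lemma good_Wd: "good (\<lambda>k. 1 + fps_X ^ k)"
proof (rule good_intro)
  fix k :: nat assume "0 < k"
  have "k \<le> k \<and> (1::rat fps) + fps_X ^ k = 1 + (1::rat fps) * fps_X ^ k" by simp
  then show "\<exists>e (c::rat fps). k \<le> e \<and> 1 + fps_X ^ k = 1 + c * fps_X ^ e" by blast
qed

lemma Wd_trunc: "m \<le> N \<Longrightarrow> eqm m Wd (\<Prod>k\<in>{1..N}. 1 + fps_X ^ k)"
  unfolding Wd_def by (rule iprod_eqm[OF good_Wd])

lemma P1: "f_fps 1 = Um * f_fps 2"
proof (rule eqm_all)
  fix m
  have a: "eqm m (f_fps 1) (\<Prod>k\<in>{1..2*m}. 1 - fps_X ^ (1*k))" by (rule f_trunc) auto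
  have b: "(\<Prod>k\<in>{1..2*m}. 1 - fps_X ^ (1*k)) = (\<Prod>k\<in>{1..m}. 1 - fps_X ^ (2*k-1)) * (\<Prod>k\<in>{1..m}. (1 - fps_X ^ (2*k) :: rat fps))"
    using split_prod[of "\<lambda>k. 1 - fps_X ^ (1*k) :: rat fps" m] by simp
  have c: "eqm m (Um * f_fps 2) ((\<Prod>k\<in>{1..m}. 1 - fps_X ^ (2*k-1)) * (\<Prod>k\<in>{1..m}. 1 - fps_X ^ (2*k)))"
    by (intro eqm_mult Um_trunc f_trunc) auto
  show "eqm m (f_fps 1) (Um * f_fps 2)"
    using eqm_trans[OF a[unfolded b] eqm_sym[OF c]] .
qed

lemma P2: "Up1 * Um * f_fps 4 = f_fps 2"
proof (rule eqm_all)
  fix m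
  have a: "eqm m (f_fps 2) (\<Prod>k\<in>{1..2*m}. 1 - fps_X ^ (2*k))" by (rule f_trunc) auto
  have b: "(\<Prod>k\<in>{1..2*m}. 1 - fps_X ^ (2*k)) = (\<Prod>k\<in>{1..m}. 1 - fps_X ^ (2*(2*k-1))) * (\<Prod>k\<in>{1..m}. (1 - fps_X ^ (2*(2*k)) :: rat fps))"
    using split_prod[of "\<lambda>k. 1 - fps_X ^ (2*k) :: rat fps" m] by simp
  have c: "eqm m (Up1 * Um * f_fps 4) ((\<Prod>k\<in>{1..m}. 1 + fps_X ^ (2*k-1)) * (\<Prod>k\<in>{1..m}. 1 - fps_X ^ (2*k-1)) * (\<Prod>k\<in>{1..m}. 1 - fps_X ^ (4*k)))"
    by (intro eqm_mult Um_trunc Up1_trunc f_trunc) auto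
  have d: "(\<Prod>k\<in>{1..m}. 1 + fps_X ^ (2*k-1)) * (\<Prod>k\<in>{1..m}. 1 - fps_X ^ (2*k-1)) = (\<Prod>k\<in>{1..m}. (1 - fps_X ^ (2*(2*k-1)) :: rat fps))"
  proof -
    have "(\<Prod>k\<in>{1..m}. 1 + fps_X ^ (2*k-1)) * (\<Prod>k\<in>{1..m}. 1 - fps_X ^ (2*k-1))
        = (\<Prod>k\<in>{1..m}. (1 + fps_X ^ (2*k-1)) * (1 - fps_X ^ (2*k-1)) :: rat fps)"
      by (simp add: prod.distrib)
    also have "\<dots> = (\<Prod>k\<in>{1..m}. (1 - fps_X ^ (2*(2*k-1)) :: rat fps))"
    proof (rule prod.cong[OF refl])
      fix k
      have "fps_X ^ (2*(2*k-1)) = fps_X ^ (2*k-1) * (fps_X ^ (2*k-1) :: rat fps)" by (simp add: mult_2 power_add)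
      then show "(1 + fps_X ^ (2*k-1)) * (1 - fps_X ^ (2*k-1)) = (1 - fps_X ^ (2*(2*k-1)) :: rat fps)"
        by (simp add: algebra_simps)
    qed
    finally show ?thesis .
  qed
  have e: "(\<Prod>k\<in>{1..m}. 1 - fps_X ^ (4*k)) = (\<Prod>k\<in>{1..m}. (1 - fps_X ^ (2*(2*k)) :: rat fps))"
    by simp
  show "eqm m (Up1 * Um * f_fps 4) (f_fps 2)"
    using eqm_trans[OF c[unfolded d e] eqm_sym[OF a[unfolded b]]] .
qed

lemma P3: "Wd * f_fps 1 = f_fps 2"
proof (rule eqm_all)
  fix m
  have a: "eqm m (f_fps 2) (\<Prod>k\<in>{1..m}. 1 - fps_X ^ (2*k))" by (rule f_trunc) auto
  have c: "eqm m (Wd * f_fps 1) ((\<Prod>k\<in>{1..m}. 1 + fps_X ^ k) * (\<Prod>k\<in>{1..m}. 1 - fps_X ^ (1*k)))"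
    by (intro eqm_mult Wd_trunc f_trunc) auto
  have d: "(\<Prod>k\<in>{1..m}. 1 + fps_X ^ k) * (\<Prod>k\<in>{1..m}. 1 - fps_X ^ (1*k)) = (\<Prod>k\<in>{1..m}. (1 - fps_X ^ (2*k) :: rat fps))"
  proof -
    have "(\<Prod>k\<in>{1..m}. 1 + fps_X ^ k) * (\<Prod>k\<in>{1..m}. 1 - fps_X ^ (1*k))
        = (\<Prod>k\<in>{1..m}. (1 + fps_X ^ k) * (1 - fps_X ^ k) :: rat fps)"
      by (simp add: prod.distrib)
    also have "\<dots> = (\<Prod>k\<in>{1..m}. (1 - fps_X ^ (2*k) :: rat fps))"
    proof (rule prod.cong[OF refl])
      fix k
      have "fps_X ^ (2*k) = fps_X ^ k * (fps_X ^ k :: rat fps)" by (simp add: mult_2 power_add)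
      then show "(1 + fps_X ^ k) * (1 - fps_X ^ k) = (1 - fps_X ^ (2*k) :: rat fps)"
        by (simp add: algebra_simps)
    qed
    finally show ?thesis .
  qed
  show "eqm m (Wd * f_fps 1) (f_fps 2)"
    using eqm_trans[OF c[unfolded d] eqm_sym[OF a]] .
qed

lemma f_ne0: "f_fps i \<noteq> 0"
  using f_fps_nth0[of i] by auto

lemma P4: "Wd * Um = 1"
proof -
  have "(Wd * Um) * f_fps 2 = 1 * f_fps 2" using P1 P3 by (simp add: mult.assoc)
  then show ?thesis using f_ne0[of 2] by (metis mult_cancel_right)
qed


definition wcons :: "('b \<Rightarrow> nat) \<Rightarrow> nat list \<times> 'b \<Rightarrow> nat" where
  "wcons w p = weight (fst p) + w (snd p)"

lemma wcons_gf:
  assumes "\<And>n. finite {x \<in> S. weight x = n}" "\<And>n. finite {y \<in> T. w y = n}"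
  shows "gfw (S \<times> T) (wcons w) = gfw S weight * gfw T w"
    and "\<And>n. finite {p \<in> S \<times> T. wcons w p = n}"
  using gfw_prod[OF assms, of "wcons w"] by (auto simp: wcons_def)

lemma th_nth0: "th s $ 0 = 1"
proof -
  have "{j::int. j*j = int 0} = {0}" by auto
  then show ?thesis by (simp add: th_def sg_def)
qed

lemma th_ne0: "th s \<noteq> 0" using th_nth0[of s] by auto

definition FF :: "rat fps" where "FF = f_fps 2 ^ 6 / (f_fps 1 ^ 4 * f_fps 4 ^ 2)"

lemma K0: "(f_fps 1 ^ 4 * f_fps 4 ^ 2) $ 0 \<noteq> 0"
  by (simp add: f_fps_nth0)

lemma FK: "FF * (f_fps 1 ^ 4 * f_fps 4 ^ 2) = f_fps 2 ^ 6"
  using K0 by (simp add: FF_def fps_divide_unit mult.assoc inverse_mult_eq_1)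

lemma K_ne0: "f_fps 1 ^ 4 * f_fps 4 ^ 2 \<noteq> 0"
  using K0 by auto

lemma thP: "th 1 = f_fps 2 * Up1 ^ 2" using gauss[of 1] by simp
lemma thM: "th (-1) = f_fps 2 * Um ^ 2" using gauss[of "-1"] by simp

lemma F_thm: "FF * th (-1) = th 1"
proof -
  let ?K = "f_fps 1 ^ 4 * f_fps 4 ^ 2"
  have "FF * th (-1) * ?K = (FF * ?K) * th (-1)" by (simp only: mult_ac)
  also have "\<dots> = f_fps 2 ^ 6 * (f_fps 2 * Um ^ 2)" by (simp only: FK thM)
  also have "\<dots> = (f_fps 2 * Up1 ^ 2) * ((Um * f_fps 2) ^ 4 * f_fps 4 ^ 2)"
  proof -
    have "(f_fps 2 * Up1 ^ 2) * ((Um * f_fps 2) ^ 4 * f_fps 4 ^ 2) = f_fps 2 ^ 5 * Um ^ 2 * (Up1 * Um * f_fps 4) ^ 2"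
      by algebra
    also have "\<dots> = f_fps 2 ^ 6 * (f_fps 2 * Um ^ 2)" unfolding P2 by algebra
    finally show ?thesis by (rule sym)
  qed
  also have "\<dots> = th 1 * ?K" by (simp only: P1 thP)
  finally show ?thesis using K_ne0 by (metis mult_cancel_right)
qed

lemma F_prod: "Up1 ^ 2 * Wd ^ 2 = FF"
proof -
  let ?K = "f_fps 1 ^ 4 * f_fps 4 ^ 2"
  have "(Up1 ^ 2 * Wd ^ 2) * ?K = (Up1 ^ 2 * Wd ^ 2) * ((Um * f_fps 2) ^ 4 * f_fps 4 ^ 2)"
    by (simp only: P1)
  also have "\<dots> = (Wd * Um) ^ 2 * (Up1 * Um * f_fps 4) ^ 2 * f_fps 2 ^ 4" by algebra
  also have "\<dots> = f_fps 2 ^ 6" unfolding P2 P4 by (simp add: power_add[symmetric])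
  also have "\<dots> = FF * ?K" by (simp only: FK)
  finally show ?thesis using K_ne0 by (metis mult_cancel_right)
qed

lemma Ev_F: "Ev FF = FF ^ 2"
proof -
  have "Ev FF * (th (-1) * th (-1)) = Ev (FF * comp2 (th (-1) * th (-1)))"
    by (simp only: Ev_comp2)
  also have "FF * comp2 (th (-1) * th (-1)) = th 1 * th 1"
    using F_thm thc by (metis mult.assoc mult.commute)
  also have "Ev (th 1 * th 1) = th 1 * th 1" by (rule thb)
  also have "\<dots> = FF ^ 2 * (th (-1) * th (-1))" unfolding F_thm[symmetric] by algebra
  finally show ?thesis using th_ne0[of "-1"] by (metis mult_cancel_right no_zero_divisors)
qed


lemma weight4_eq: "weight4 = wcons (wcons (wcons weight))"
  by (rule ext) (auto simp: weight4_def wcons_def split: prod.splits)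

lemma weight8_eq: "weight8 = wcons (wcons (wcons (wcons (wcons (wcons (wcons weight))))))"
  by (rule ext) (auto simp: weight8_def wcons_def split: prod.splits)

lemma gf_src: "gfw (Do \<times> Do \<times> D \<times> D) weight4 = FF"
  and fin_src: "finite {t \<in> Do \<times> Do \<times> D \<times> D. weight4 t = n}"
proof -
  note g2 = wcons_gf[of D D weight, OF finite_D finite_D]
  note g3 = wcons_gf[of Do "D \<times> D" "wcons weight", OF finite_Do g2(2)]
  note g4 = wcons_gf[of Do "Do \<times> D \<times> D" "wcons (wcons weight)", OF finite_Do g3(2)]
  have "gfw (Do \<times> Do \<times> D \<times> D) weight4 = Up * (Up * (Wd * Wd))"
    unfolding weight4_eq g4(1) g3(1) g2(1) gfw_Do gfw_D ..
  also have "\<dots> = FF" unfolding F_prod[symmetric] Up_eq by algebra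
  finally show "gfw (Do \<times> Do \<times> D \<times> D) weight4 = FF" .
  show "finite {t \<in> Do \<times> Do \<times> D \<times> D. weight4 t = n}"
    unfolding weight4_eq by (rule g4(2))
qed

lemma gf_tgt: "gfw Tgt weight8 = FF ^ 2"
  and fin_tgt: "finite {t \<in> Tgt. weight8 t = n}"
proof -
  note g2 = wcons_gf[of D D weight, OF finite_D finite_D]
  note g3 = wcons_gf[of D "D \<times> D" "wcons weight", OF finite_D g2(2)]
  note g4 = wcons_gf[of D "D \<times> D \<times> D" "wcons (wcons weight)", OF finite_D g3(2)]
  note g5 = wcons_gf[of Do "D \<times> D \<times> D \<times> D" "wcons (wcons (wcons weight))", OF finite_Do g4(2)]
  note g6 = wcons_gf[of Do "Do \<times> D \<times> D \<times> D \<times> D" "wcons (wcons (wcons (wcons weight)))", OF finite_Do g5(2)]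
  note g7 = wcons_gf[of Do "Do \<times> Do \<times> D \<times> D \<times> D \<times> D" "wcons (wcons (wcons (wcons (wcons weight))))", OF finite_Do g6(2)]
  note g8 = wcons_gf[of Do "Do \<times> Do \<times> Do \<times> D \<times> D \<times> D \<times> D" "wcons (wcons (wcons (wcons (wcons (wcons weight)))))", OF finite_Do g7(2)]
  have "gfw Tgt weight8 = Up * (Up * (Up * (Up * (Wd * (Wd * (Wd * Wd))))))"
    unfolding Tgt_def weight8_eq g8(1) g7(1) g6(1) g5(1) g4(1) g3(1) g2(1) gfw_Do gfw_D ..
  also have "\<dots> = FF ^ 2" unfolding F_prod[symmetric] Up_eq by algebra
  finally show "gfw Tgt weight8 = FF ^ 2" .
  show "finite {t \<in> Tgt. weight8 t = n}"
    unfolding Tgt_def weight8_eq by (rule g8(2))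
qed

lemma gfw_nth: "gfw S w $ n = of_nat (card {x \<in> S. w x = n})"
  by (simp add: gfw_def)

theorem theorem2p10:
  shows "(\<exists>\<phi>. bij_betw \<phi> Src Tgt \<and> (\<forall>t\<in>Src. 2 * weight8 (\<phi> t) = weight4 t))
         \<and> Abs_fps (\<lambda>n. P_seq (2 * n)) = (Abs_fps P_seq) ^ 2"
proof
  have "P_seq = fps_nth FF" by (rule ext) (simp add: P_seq_def FF_def)
  then have PF: "Abs_fps P_seq = FF" by (intro fps_ext) simp
  have src_fib: "{t \<in> Src. weight4 t = m} = (if even m then {t \<in> Do \<times> Do \<times> D \<times> D. weight4 t = m} else {})" for m
    by (auto simp: Src_def)
  show "\<exists>\<phi>. bij_betw \<phi> Src Tgt \<and> (\<forall>t\<in>Src. 2 * weight8 (\<phi> t) = weight4 t)"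
  proof (rule bij_from_counts)
    show "finite {x \<in> Src. weight4 x = n}" for n
      using fin_src[of n] by (simp add: src_fib)
    show "finite {y \<in> Tgt. weight8 y = n}" for n by (rule fin_tgt)
    show "even (weight4 x)" if "x \<in> Src" for x using that by (simp add: Src_def)
    show "card {x \<in> Src. weight4 x = 2 * n} = card {y \<in> Tgt. weight8 y = n}" for n
    proof -
      have "(of_nat (card {x \<in> Src. weight4 x = 2 * n}) :: rat) = gfw (Do \<times> Do \<times> D \<times> D) weight4 $ (2*n)"
        by (simp add: src_fib gfw_nth)
      also have "\<dots> = Ev FF $ n" by (simp add: gf_src Ev_def)
      also have "\<dots> = gfw Tgt weight8 $ n" by (simp add: Ev_F gf_tgt)
      also have "\<dots> = of_nat (card {y \<in> Tgt. weight8 y = n})" by (rule gfw_nth)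
      finally show ?thesis by (simp only: of_nat_eq_iff)
    qed
  qed
  have "Abs_fps (\<lambda>n. P_seq (2 * n)) = Ev FF"
    by (simp add: Ev_def P_seq_def FF_def)
  then show "Abs_fps (\<lambda>n. P_seq (2 * n)) = (Abs_fps P_seq) ^ 2"
    by (simp add: Ev_F PF)
qed

end
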